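(* Let $\alpha>0$, $\alpha\neq1$, and consider the system $$\dot u=\frac{uv}{u^2+v^2}-\alpha u,\qquad \dot v=\frac{v^2}{u^2+v^2}-\alpha v+\alpha-1 .$$ Then $$F=u^{\frac{\alpha}{1-\alpha}}\,v^{\frac{1}{\alpha-1}}\Big(\frac{u^2}{v^2}+1\Big)^{\frac{1}{2(\alpha-1)}}-\frac{\alpha\, v\ {}_2F_1\!\left(\frac12,\frac{\alpha}{2(\alpha-1)}+1;\frac32;\frac{v^2}{u^2+v^2}\right)}{(\alpha-1)\sqrt{u^2+v^2}}$$ is a first integral of this system.
   Context: ${}_2F_1(a,b;c;z)$ denotes the Gaussian hypergeometric function. The system is the special case $\alpha=\beta$ of Dixon's system $\dot u=\frac{uv}{u^2+v^2}-\alpha u$, $\dot v=\frac{v^2}{u^2+v^2}-\beta v+\beta-1$. *)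

theory Defs
  imports "HOL-Analysis.Analysis"
begin

text \<open>Gaussian hypergeometric function 2F1(a,b;c;z), defined by its power series
  (convergent for |z| < 1, which is the range used below).\<close>
definition hyp2F1 :: "real \<Rightarrow> real \<Rightarrow> real \<Rightarrow> real \<Rightarrow> real" where
  "hyp2F1 a b c z =
     (\<Sum>n. pochhammer a n * pochhammer b n / (pochhammer c n * fact n) * z ^ n)"

text \<open>The candidate first integral F of the system (case alpha = beta of Dixon's system).\<close>
definition dixonF :: "real \<Rightarrow> real \<Rightarrow> real \<Rightarrow> real" where
  "dixonF \<alpha> u v =
     u powr (\<alpha> / (1 - \<alpha>)) * v powr (1 / (\<alpha> - 1)) * (u\<^sup>2 / v\<^sup>2 + 1) powr (1 / (2 * (\<alpha> - 1)))
     - \<alpha> * v * hyp2F1 (1/2) (\<alpha> / (2 * (\<alpha> - 1)) + 1) (3/2) (v\<^sup>2 / (u\<^sup>2 + v\<^sup>2))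
       / ((\<alpha> - 1) * sqrt (u\<^sup>2 + v\<^sup>2))"

end

theory Submission imports Defs begin
definition hc :: "real \<Rightarrow> nat \<Rightarrow> real" where
  "hc b n = pochhammer (1/2) n * pochhammer b n / (pochhammer (3/2) n * fact n)"

lemma poch32: "pochhammer (3/2::real) n = pochhammer (1/2) n * (2 * real n + 1)"
proof -
  have "pochhammer (1/2::real) (Suc n) = 1/2 * pochhammer (1/2 + 1) n"
    by (rule pochhammer_rec)
  moreover have "pochhammer (1/2::real) (Suc n) = pochhammer (1/2) n * (1/2 + real n)"
    by (rule pochhammer_Suc)
  ultimately show ?thesis by (simp add: field_simps)
qed

lemma hc_eq: "hc b n * (2 * real n + 1) = pochhammer b n / fact n"
proof -
  have "pochhammer (1/2::real) n > 0" by (rule pochhammer_pos) simp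
  moreover have "(2 * real n + 1) > 0" by simp
  ultimately show ?thesis unfolding hc_def poch32
    by (simp add: divide_simps)
qed

lemma hc_bound: "\<bar>hc b n\<bar> \<le> \<bar>((-b) gchoose n)\<bar>"
proof -
  have "\<bar>hc b n\<bar> * (2 * real n + 1) = \<bar>pochhammer b n / fact n\<bar>"
    using hc_eq[of b n] by (metis abs_mult abs_of_nonneg of_nat_0_le_iff
          add_nonneg_nonneg mult_nonneg_nonneg zero_le_one zero_le_numeral)
  moreover have "\<bar>((-b) gchoose n)\<bar> = \<bar>pochhammer b n / fact n\<bar>"
    by (simp add: gbinomial_pochhammer abs_mult)
  moreover have "\<bar>hc b n\<bar> \<le> \<bar>hc b n\<bar> * (2 * real n + 1)"
    by (simp add: mult_le_cancel_left1)
  ultimately show ?thesis by simp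
qed

lemma hc_summable:
  assumes "norm (z::real) < 1"
  shows "summable (\<lambda>n. hc b n * z ^ n)"
proof -
  have "ereal (norm z) < conv_radius (\<lambda>n. (-b) gchoose n)"
    using assms by (simp add: conv_radius_gchoose)
  then have "summable (\<lambda>n. norm (((-b) gchoose n) * z ^ n))"
    by (rule abs_summable_in_conv_radius)
  then show ?thesis
    by (rule summable_comparison_test'[where N=0])
       (simp add: abs_mult mult_right_mono hc_bound)
qed

lemma binom_poch:
  assumes "\<bar>z::real\<bar> < 1"
  shows "(\<lambda>n. pochhammer b n / fact n * z ^ n) sums (1 - z) powr (-b)"
proof -
  have "\<bar>-z\<bar> < 1" using assms by simp
  then have "(\<lambda>n. ((-b) gchoose n) * (-z)^n) sums (1 + (-z)) powr (-b)"
    by (rule gen_binomial_real)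
  moreover have "(\<lambda>n. ((-b) gchoose n) * (-z)^n) = (\<lambda>n. pochhammer b n / fact n * z ^ n)"
  proof (rule ext)
    fix n
    have e1: "((-b) gchoose n) = (-1)^n * pochhammer b n / fact n" by (simp add: gbinomial_pochhammer)
    have e2: "(-z)^n = (-1)^n * z^n" by (rule power_minus)
    have m: "(-1::real)^n * (-1)^n = 1" by (induct n) auto
    have "((-b) gchoose n) * (-z)^n = ((-1)^n * pochhammer b n / fact n) * ((-1)^n * z^n)" by (simp only: e1 e2)
    also have "\<dots> = ((-1)^n * (-1)^n) * (pochhammer b n / fact n * z^n)" by (simp add: mult_ac)
    also have "\<dots> = pochhammer b n / fact n * z^n" by (simp only: m mult_1_left)
    finally show "((-b) gchoose n) * (-z)^n = pochhammer b n / fact n * z ^ n" .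
  qed
  moreover have "(1 + (-z)) = 1 - z" by simp
  ultimately show ?thesis by (simp only:)
qed

lemma H_deriv:
  assumes "\<bar>x::real\<bar> < 1"
  shows "((\<lambda>x. x * hyp2F1 (1/2) b (3/2) (x^2)) has_real_derivative (1 - x^2) powr (-b)) (at x)"
proof -
  have fe: "hyp2F1 (1/2) b (3/2) = (\<lambda>z. \<Sum>n. hc b n * z^n)"
    by (auto simp: hyp2F1_def hc_def fun_eq_iff)
  define z where "z = x^2"
  have z1: "norm z < 1" using assms unfolding z_def
    by (simp add: abs_square_less_1)
  define f where "f = (\<Sum>n. hc b n * z^n)"
  define f' where "f' = (\<Sum>n. diffs (hc b) n * z^n)"
  have fD: "((\<lambda>z. \<Sum>n. hc b n * z^n) has_field_derivative f') (at z)"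
    unfolding f'_def by (rule termdiffs_strong'[of 1, OF hc_summable z1])
  have S0: "(\<lambda>n. hc b n * z^n) sums f"
    unfolding f_def by (rule summable_sums) (rule hc_summable[OF z1])
  have "summable (\<lambda>n. diffs (hc b) n * z^n)"
    by (rule termdiff_converges[OF z1]) (rule hc_summable)
  then have "(\<lambda>n. diffs (hc b) n * z^n) sums f'" unfolding f'_def by (rule summable_sums)
  then have "(\<lambda>n. diffs (hc b) n * z^n * z) sums (f' * z)" by (rule sums_mult2)
  moreover have "diffs (hc b) n * z^n * z = (\<lambda>m. real m * hc b m * z^m) (Suc n)" for n
    by (simp add: diffs_def)
  ultimately have "(\<lambda>n. (\<lambda>m. real m * hc b m * z^m) (Suc n)) sums (f' * z)" by simp
  then have S1: "(\<lambda>m. real m * hc b m * z^m) sums (f' * z)"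
    by (subst (asm) sums_Suc_iff) simp
  have S2: "(\<lambda>n. hc b n * z^n + 2 * (real n * hc b n * z^n)) sums (f + 2 * (f' * z))"
    by (intro sums_add sums_mult S0 S1)
  have eqf: "(\<lambda>n. hc b n * z^n + 2 * (real n * hc b n * z^n)) = (\<lambda>n. pochhammer b n / fact n * z ^ n)"
  proof (rule ext)
    fix n
    have "hc b n * z^n + 2 * (real n * hc b n * z^n) = (hc b n * (2 * real n + 1)) * z^n"
      by (simp add: algebra_simps)
    then show "hc b n * z^n + 2 * (real n * hc b n * z^n) = pochhammer b n / fact n * z ^ n" by (simp only: hc_eq)
  qed
  from S2 have "(\<lambda>n. pochhammer b n / fact n * z ^ n) sums (f + 2 * (f' * z))" by (simp only: eqf)
  then have key: "f + 2 * (f' * z) = (1 - z) powr (-b)"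
    using binom_poch[of z b] z1 sums_unique2 by auto
  have d2: "((\<lambda>x. x^2) has_real_derivative 2*x) (at x)" by (auto intro!: derivative_eq_intros)
  have "((\<lambda>x. (\<Sum>n. hc b n * (x^2)^n)) has_real_derivative f' * (2*x)) (at x)"
    using DERIV_chain2[OF fD[unfolded z_def] d2] by simp
  from DERIV_mult[OF DERIV_ident this]
  have "((\<lambda>x. x * (\<Sum>n. hc b n * (x^2)^n)) has_real_derivative (1 * (\<Sum>n. hc b n * (x^2)^n) + f' * (2*x) * x)) (at x)" .
  moreover have "1 * (\<Sum>n. hc b n * (x^2)^n) + f' * (2*x) * x = (1 - x^2) powr (-b)"
    using key unfolding f_def z_def by (simp add: power2_eq_square algebra_simps)
  ultimately show ?thesis unfolding fe by simp
qed

lemma F_repr: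
  assumes "U > 0" "V > 0" "\<alpha> \<noteq> 1"
  shows "dixonF \<alpha> U V = exp ((1/(\<alpha>-1)) * (ln (U\<^sup>2 + V\<^sup>2) / 2 - \<alpha> * ln U))
     - \<alpha> / (\<alpha> - 1) * ((V / sqrt (U\<^sup>2 + V\<^sup>2)) * hyp2F1 (1/2) (\<alpha> / (2 * (\<alpha> - 1)) + 1) (3/2) ((V / sqrt (U\<^sup>2 + V\<^sup>2))^2))"
proof -
  define Q where "Q = U\<^sup>2 + V\<^sup>2"
  have Q: "Q > 0" using assms unfolding Q_def by (simp add: add_pos_pos)
  have e1: "U\<^sup>2 / V\<^sup>2 + 1 = Q / V\<^sup>2" using assms unfolding Q_def by (simp add: field_simps)
  have l1: "ln (Q / V\<^sup>2) = ln Q - 2 * ln V" using assms Q by (simp add: ln_div ln_realpow)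
  have "U powr (\<alpha> / (1 - \<alpha>)) * V powr (1 / (\<alpha> - 1)) * (U\<^sup>2 / V\<^sup>2 + 1) powr (1 / (2 * (\<alpha> - 1)))
     = exp ((\<alpha> / (1 - \<alpha>)) * ln U + (1 / (\<alpha> - 1)) * ln V + (1 / (2 * (\<alpha> - 1))) * (ln Q - 2 * ln V))"
    using assms Q unfolding e1 by (simp add: powr_def l1 exp_add mult.commute)
  also have "(\<alpha> / (1 - \<alpha>)) * ln U + (1 / (\<alpha> - 1)) * ln V + (1 / (2 * (\<alpha> - 1))) * (ln Q - 2 * ln V)
     = (1/(\<alpha>-1)) * (ln Q / 2 - \<alpha> * ln U)"
  proof -
    have a1: "\<alpha> - 1 \<noteq> 0" "1 - \<alpha> \<noteq> 0" using assms by auto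
    have h1: "\<alpha> / (1 - \<alpha>) = - \<alpha> * (1/(\<alpha>-1))" using a1 by (simp add: field_simps)
    have h2: "1 / (2 * (\<alpha> - 1)) = (1/(\<alpha>-1)) / 2" by simp
    define k where "k = 1/(\<alpha>-1)"
    show ?thesis unfolding h1 h2 k_def[symmetric] by (simp add: algebra_simps)
  qed
  finally have A: "U powr (\<alpha> / (1 - \<alpha>)) * V powr (1 / (\<alpha> - 1)) * (U\<^sup>2 / V\<^sup>2 + 1) powr (1 / (2 * (\<alpha> - 1)))
     = exp ((1/(\<alpha>-1)) * (ln Q / 2 - \<alpha> * ln U))" .
  have sq: "(V / sqrt Q)^2 = V\<^sup>2 / Q" using Q by (simp add: power_divide)
  show ?thesis unfolding dixonF_def A Q_def[symmetric] sq by simp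
qed

lemma alg_a1: "(Q::real) > 0 \<Longrightarrow> (U * V / Q - \<alpha> * U) * Q = U*V - \<alpha>*U*Q" by (simp add: field_simps)
lemma alg_a2: "(Q::real) > 0 \<Longrightarrow> (V\<^sup>2 / Q - \<alpha> * V + \<alpha> - 1) * Q = V\<^sup>2 - \<alpha>*V*Q + (\<alpha>-1)*Q" by (simp add: field_simps)
lemma alg_a3: "(U*U'+V*V')*(Q::real) = U*(U'*Q) + V*(V'*Q)" by (simp add: algebra_simps)
lemma alg_a4: "U*(U*V - \<alpha>*U*(U\<^sup>2 + V\<^sup>2)) + V*(V\<^sup>2 - \<alpha>*V*(U\<^sup>2 + V\<^sup>2) + (\<alpha>-1)*(U\<^sup>2 + V\<^sup>2)) = \<alpha>*(V-(U\<^sup>2 + V\<^sup>2))*(U\<^sup>2 + (V::real)\<^sup>2)" by (simp add: algebra_simps power2_eq_square)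
lemma alg_a5: "inverse (Q::real) * (2*U*U' + 2*V*V') / 2 = (U*U' + V*V') / Q" by (cases "Q = 0") (simp_all add: field_simps)
lemma alg_a6: "(Q::real) > 0 \<Longrightarrow> \<alpha> * (V - Q) / Q - \<alpha> * (V / Q - \<alpha>) = \<alpha> * (\<alpha> - 1)" by (simp add: field_simps)
lemma alg_a7: "V\<^sup>2 - \<alpha>*V*(U\<^sup>2 + V\<^sup>2) + (\<alpha>-1)*(U\<^sup>2 + V\<^sup>2) - V*(\<alpha>*(V-(U\<^sup>2 + V\<^sup>2))) = (\<alpha>-1)*(U::real)\<^sup>2" by (simp add: algebra_simps power2_eq_square)
lemma alg_a8: "(U::real) > 0 \<Longrightarrow> Q > 0 \<Longrightarrow> inverse U * (U * V / Q - \<alpha> * U) = V / Q - \<alpha>" by (simp add: field_simps)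

lemma exp3: "exp A * (exp B / exp C) = exp (A + B - (C::real))"
  by (simp add: exp_diff exp_add)

lemma cancel1: "(a::real) - 1 \<noteq> 0 \<Longrightarrow> (x * w) * a - a / (a - 1) * (x * ((a - 1) * w)) = 0"
  by (simp add: field_simps)

theorem mainTheorem3:
  fixes \<alpha> :: real and T :: "real set" and u v :: "real \<Rightarrow> real"
  assumes "\<alpha> > 0" and "\<alpha> \<noteq> 1"
    and "is_interval T"
    and "\<forall>t\<in>T. u t > 0 \<and> v t > 0"
    and "\<forall>t\<in>T. (u has_real_derivative
            (u t * v t / ((u t)\<^sup>2 + (v t)\<^sup>2) - \<alpha> * u t)) (at t within T)"
    and "\<forall>t\<in>T. (v has_real_derivative
            ((v t)\<^sup>2 / ((u t)\<^sup>2 + (v t)\<^sup>2) - \<alpha> * v t + \<alpha> - 1)) (at t within T)"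
  shows "\<forall>s\<in>T. \<forall>t\<in>T. dixonF \<alpha> (u s) (v s) = dixonF \<alpha> (u t) (v t)"
proof -
  define k where "k = 1/(\<alpha>-1)"
  define b where "b = \<alpha> / (2 * (\<alpha> - 1)) + 1"
  define H where "H = (\<lambda>x. x * hyp2F1 (1/2) b (3/2) (x^2))"
  define \<Phi> where "\<Phi> = (\<lambda>t. exp (k * (ln ((u t)\<^sup>2 + (v t)\<^sup>2) / 2 - \<alpha> * ln (u t)))
      - \<alpha> / (\<alpha> - 1) * H (v t / sqrt ((u t)\<^sup>2 + (v t)\<^sup>2)))"
  have rep: "dixonF \<alpha> (u t) (v t) = \<Phi> t" if "t \<in> T" for t
    using F_repr[of "u t" "v t" \<alpha>] assms(2,4) that unfolding \<Phi>_def H_def k_def b_def by auto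
  have deriv: "(\<Phi> has_field_derivative 0) (at t within T)" if tT: "t \<in> T" for t
  proof -
    define U where "U = u t"
    define V where "V = v t"
    define Q where "Q = U\<^sup>2 + V\<^sup>2"
    define U' where "U' = U * V / Q - \<alpha> * U"
    define V' where "V' = V\<^sup>2 / Q - \<alpha> * V + \<alpha> - 1"
    have U: "U > 0" and V: "V > 0" using assms(4) tT unfolding U_def V_def by auto
    have Q: "Q > 0" unfolding Q_def using U V by (simp add: add_pos_pos)
    have dU: "(u has_real_derivative U') (at t within T)"
      using assms(5) tT unfolding U'_def U_def V_def Q_def by auto
    have dV: "(v has_real_derivative V') (at t within T)"
      using assms(6) tT unfolding V'_def U_def V_def Q_def by auto
    have a1: "\<alpha> - 1 \<noteq> 0" using assms(2) by auto
    have dQ: "((\<lambda>t. (u t)\<^sup>2 + (v t)\<^sup>2) has_real_derivative 2*U*U' + 2*V*V') (at t within T)"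
      unfolding U_def V_def by (auto intro!: derivative_eq_intros dU dV)
    have dL1: "((\<lambda>t. ln ((u t)\<^sup>2 + (v t)\<^sup>2)) has_real_derivative inverse Q * (2*U*U' + 2*V*V')) (at t within T)"
      using DERIV_chain2[OF DERIV_ln[OF Q[unfolded Q_def U_def V_def]] dQ] unfolding Q_def U_def V_def .
    have dL2: "((\<lambda>t. ln (u t)) has_real_derivative inverse U * U') (at t within T)"
      using DERIV_chain2[OF DERIV_ln[OF U[unfolded U_def]] dU] unfolding U_def .
    have dIn: "((\<lambda>t. k * (ln ((u t)\<^sup>2 + (v t)\<^sup>2) / 2 - \<alpha> * ln (u t))) has_real_derivative
        k * (inverse Q * (2*U*U' + 2*V*V') / 2 - \<alpha> * (inverse U * U'))) (at t within T)"
      by (intro DERIV_cmult DERIV_diff DERIV_cdivide dL1 dL2)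
    have uq: "U' * Q = U*V - \<alpha>*U*Q" unfolding U'_def using Q by (rule alg_a1)
    have vq: "V' * Q = V\<^sup>2 - \<alpha>*V*Q + (\<alpha>-1)*Q" unfolding V'_def using Q by (rule alg_a2)
    have s1: "U*U' + V*V' = \<alpha>*(V-Q)"
    proof -
      have "(U*U'+V*V')*Q = U*(U'*Q) + V*(V'*Q)" by (rule alg_a3)
      also have "\<dots> = U*(U*V - \<alpha>*U*Q) + V*(V\<^sup>2 - \<alpha>*V*Q + (\<alpha>-1)*Q)" by (simp only: uq vq)
      also have "\<dots> = \<alpha>*(V-Q)*Q" unfolding Q_def by (rule alg_a4)
      finally have "(U*U'+V*V')*Q = \<alpha>*(V-Q)*Q" .
      then show ?thesis using Q by (metis mult_right_cancel order_less_irrefl)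
    qed
    have algE: "k * (inverse Q * (2*U*U' + 2*V*V') / 2 - \<alpha> * (inverse U * U')) = \<alpha>"
    proof -
      have "inverse Q * (2*U*U' + 2*V*V') / 2 - \<alpha> * (inverse U * U') = \<alpha> * (V - Q) / Q - \<alpha> * (V / Q - \<alpha>)"
        unfolding alg_a5 s1 unfolding U'_def alg_a8[OF U Q] ..
      also have "\<dots> = \<alpha> * (\<alpha> - 1)" using Q by (rule alg_a6)
      finally show ?thesis unfolding k_def using a1 by simp
    qed
    have dE: "((\<lambda>t. exp (k * (ln ((u t)\<^sup>2 + (v t)\<^sup>2) / 2 - \<alpha> * ln (u t))))
       has_real_derivative exp (k * (ln Q / 2 - \<alpha> * ln U)) * \<alpha>) (at t within T)"
      using DERIV_chain2[OF DERIV_exp dIn] algE unfolding Q_def U_def V_def by simp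
    define s where "s = sqrt Q"
    have s: "s > 0" "s * s = Q" using Q unfolding s_def by auto
    have dS: "((\<lambda>t. sqrt ((u t)\<^sup>2 + (v t)\<^sup>2)) has_real_derivative inverse s / 2 * (2*U*U' + 2*V*V')) (at t within T)"
      using DERIV_chain2[OF DERIV_real_sqrt[OF Q[unfolded Q_def U_def V_def]] dQ] unfolding s_def Q_def U_def V_def by simp
    have dX0: "((\<lambda>t. v t / sqrt ((u t)\<^sup>2 + (v t)\<^sup>2)) has_real_derivative
         (V' * s - V * (inverse s / 2 * (2*U*U' + 2*V*V'))) / (s * s)) (at t within T)"
      using DERIV_divide[OF dV dS] s V unfolding s_def Q_def U_def V_def by simp
    have algX: "(V' * s - V * (inverse s / 2 * (2*U*U' + 2*V*V'))) / (s * s) = (\<alpha> - 1) * U\<^sup>2 / (Q * s)"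
    proof -
      have n: "V' * Q - V * (U*U' + V*V') = (\<alpha> - 1) * U\<^sup>2"
        unfolding vq s1 unfolding Q_def by (rule alg_a7)
      have "(V' * s - V * (inverse s / 2 * (2*U*U' + 2*V*V'))) / (s * s) = (V' * Q - V * (U*U' + V*V')) / (Q * s)"
        using s(1) unfolding s(2)[symmetric] by (simp add: field_simps)
      then show ?thesis using n by simp
    qed
    define X where "X = V / s"
    have X: "\<bar>X\<bar> < 1" "X^2 = V\<^sup>2 / Q"
    proof -
      have "X^2 = V\<^sup>2 / Q" unfolding X_def using s by (simp add: power_divide power2_eq_square)
      moreover have "V\<^sup>2 / Q < 1" using U Q unfolding Q_def by (simp add: field_simps)
      ultimately have "X^2 < 1" "X^2 = V\<^sup>2 / Q" by simp_all
      then show "X^2 = V\<^sup>2 / Q" "\<bar>X\<bar> < 1" using abs_square_less_1 by blast+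
    qed
    have dH: "(H has_real_derivative (1 - X^2) powr (-b)) (at X)"
      unfolding H_def by (rule H_deriv[OF X(1)])
    have dHX: "((\<lambda>t. H (v t / sqrt ((u t)\<^sup>2 + (v t)\<^sup>2))) has_real_derivative
        (1 - X^2) powr (-b) * ((\<alpha> - 1) * U\<^sup>2 / (Q * s))) (at t within T)"
    proof -
      have dX: "((\<lambda>t. v t / sqrt ((u t)\<^sup>2 + (v t)\<^sup>2)) has_real_derivative (\<alpha> - 1) * U\<^sup>2 / (Q * s)) (at t within T)"
        using dX0 unfolding algX .
      have Xt: "v t / sqrt ((u t)\<^sup>2 + (v t)\<^sup>2) = X" by (simp add: X_def s_def Q_def U_def V_def)
      show ?thesis using DERIV_chain2[OF dH[folded Xt] dX] unfolding Xt .
    qed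
    have dPhi: "(\<Phi> has_real_derivative exp (k * (ln Q / 2 - \<alpha> * ln U)) * \<alpha>
        - \<alpha> / (\<alpha> - 1) * ((1 - X^2) powr (-b) * ((\<alpha> - 1) * U\<^sup>2 / (Q * s)))) (at t within T)"
      unfolding \<Phi>_def by (rule DERIV_diff[OF dE DERIV_cmult[OF dHX]])
    have key: "exp (k * (ln Q / 2 - \<alpha> * ln U)) = (1 - X^2) powr (-b) * (U\<^sup>2 / (Q * s))"
    proof -
      have qq: "U\<^sup>2 / Q + V\<^sup>2 / Q = 1" unfolding add_divide_distrib[symmetric] using Q V unfolding Q_def by simp
      have "1 - X^2 = U\<^sup>2 / Q" using X(2) qq by linarith
      then have "(1 - X^2) powr (-b) = exp (-b * (2 * ln U - ln Q))"
        using U Q by (simp add: powr_def ln_div ln_realpow)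
      moreover have e2: "U\<^sup>2 = exp (2 * ln U)"
      proof -
        have "exp (2 * ln U) = exp (ln U) ^ 2" using exp_of_nat_mult[of 2 "ln U"] by simp
        then show ?thesis using U by simp
      qed
      moreover have e3: "Q * s = exp (ln Q + ln Q / 2)"
      proof -
        have "s = Q powr (1/2)" unfolding s_def using Q by (simp add: powr_half_sqrt)
        then have se: "s = exp (ln Q / 2)" using Q by (simp add: powr_def)
        have "exp (ln Q + ln Q / 2) = Q * s" by (subst exp_add) (simp add: Q se)
        then show ?thesis by simp
      qed
      ultimately have "(1 - X^2) powr (-b) * (U\<^sup>2 / (Q * s)) = exp (-b * (2 * ln U - ln Q)) * (exp (2 * ln U) / exp (ln Q + ln Q / 2))"
        by (simp only:)
      also have "\<dots> = exp (-b * (2 * ln U - ln Q) + 2 * ln U - (ln Q + ln Q / 2))"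
        by (rule exp3)
      also have "-b * (2 * ln U - ln Q) + 2 * ln U - (ln Q + ln Q / 2) = k * (ln Q / 2 - \<alpha> * ln U)"
      proof -
        have kb: "b = \<alpha> * k / 2 + 1" "\<alpha> * k = k + 1" using a1 unfolding b_def k_def by (simp_all add: field_simps)
        have b3: "b = (k + 3) / 2" unfolding kb(1) using kb(2) by simp
        have "k * (ln Q / 2 - \<alpha> * ln U) = k * ln Q / 2 - (\<alpha> * k) * ln U" by (simp add: algebra_simps)
        also have "\<dots> = k * ln Q / 2 - (k + 1) * ln U" by (simp only: kb(2))
        finally have r: "k * (ln Q / 2 - \<alpha> * ln U) = k * ln Q / 2 - (k + 1) * ln U" .
        show ?thesis unfolding r b3 by (simp add: field_simps)
      qed
      finally show ?thesis by (rule sym)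
    qed
    have z0: "exp (k * (ln Q / 2 - \<alpha> * ln U)) * \<alpha>
        - \<alpha> / (\<alpha> - 1) * ((1 - X^2) powr (-b) * ((\<alpha> - 1) * U\<^sup>2 / (Q * s))) = 0"
      unfolding key times_divide_eq_right[symmetric] using cancel1[OF a1] by simp
    show ?thesis using dPhi unfolding z0 .
  qed
  obtain c where "\<forall>t\<in>T. \<Phi> t = c"
    using has_field_derivative_zero_constant[OF is_interval_convex[OF assms(3)] deriv] by blast
  then show ?thesis using rep by simp
qed

end
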